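(* Consider the two-layer multi-item order fulfillment problem described in the context, with $K\ge 1$ FDCs, fixed costs $f_0\ge 0$ and $f_1,\dots,f_K>0$, and time-invariant variable costs $c_{k,t}^i\equiv c_k^i$. Let \textsc{Cost-Comparison V-Priority} be the Gated Priority-based Greedy policy that uses, for each item $i$, the ranking $k\prec_i j\iff c_k^i<c_j^i$ or ($c_k^i=c_j^i$ and $k<j$) on $\{0,\dots,K\}$, and the gating condition \[G=\mathbb{I}\left(\sum_{k=0}^K\Big[f_k\,\mathbb{I}\Big(\sum_{i=1}^n\hat m_{k,t}^i>0\Big)+\sum_{i=1}^n c_k^i\hat m_{k,t}^i\Big]>f_0+\sum_{i=1}^n c_0^iS_t^i\right).\] Then \[\mathfrak R_{\mathrm{inv}}(\textsc{Cost-Comparison V-Priority})\le\max\left\{\frac{f_0+\sum_{k\in[K]}f_k}{\min_{k\in[K]}f_k},\ 2\right\}.\]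
   Context: Problem. $n$ items, $K$ FDCs indexed $k\in[K]$, an RDC indexed $k=0$ with unlimited inventory. FDC $k$ initially holds $I_{k,0}^i\ge 0$ units of item $i$, never replenished. In periods $t=1,\dots,T$ an order $\boldsymbol S_t=(S_t^i)_i$ of nonnegative integers arrives; the policy must immediately and irrevocably choose $m_{k,t}^i\ge 0$ with $\sum_{k=0}^K m_{k,t}^i=S_t^i$ and $m_{k,t}^i\le I_{k,t-1}^i$ for $k\in[K]$, where $I_{k,t}^i=I_{k,0}^i-\sum_{\tau\le t}m_{k,\tau}^i$. Period cost $\sum_{k=0}^K[f_k\mathbb{I}(\sum_i m_{k,t}^i>0)+\sum_i c_{k,t}^im_{k,t}^i]$; total cost is the sum. An online policy (possibly randomized) decides in period $t$ using only fixed costs, initial inventories and orders/variable costs up to $t$. $\mathrm{ALG}(I)$ is the (expected) total cost on instance $I$, $\mathrm{OPT}(I)$ the offline optimal total cost. The time-invariant competitive ratio $\mathfrak R_{\mathrm{inv}}(\mathrm{ALG})$ is the supremum of $\mathrm{ALG}(I)/\mathrm{OPT}(I)$ over all $n,T$, initial inventories, nonnegative time-invariant variable costs $c_{k,t}^i=c_k^i$ (for all $t$), and order sequences. Gated Priority-based Greedy policy: with rankings $\prec_i$ on $\{0,\dots,K\}$ and gating condition $G$, in each period $t$ compute $\hat m_{k,t}^i=\min\{(S_t^i-\sum_{k'\in[K]:k'\prec_ik}I_{k',t-1}^i)^+,\ I_{k,t-1}^i\}\cdot\mathbb{I}(k\prec_i0)$ for $k\in[K]$ and $\hat m_{0,t}^i=S_t^i-\sum_{k\in[K]}\hat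 m_{k,t}^i$; if $G=1$, send the whole order to the RDC ($m_{0,t}^i=S_t^i$, $m_{k,t}^i=0$ for $k\in[K]$), otherwise set $m_{k,t}^i=\hat m_{k,t}^i$; then update inventories. *)

theory Defs
  imports Complex_Main
begin

text \<open>Items are indexed by i < n, FDCs by k \<in> {1..K}, the RDC by k = 0,
periods by t \<in> {1..T}. Fixed costs f k, time-invariant variable costs c k i,
initial FDC inventories I0 k i, orders S t i. An allocation in period t is a
function m k i (units of item i sent from node k).\<close>

definition period_cost ::
  "nat \<Rightarrow> nat \<Rightarrow> (nat \<Rightarrow> real) \<Rightarrow> (nat \<Rightarrow> nat \<Rightarrow> real) \<Rightarrow> (nat \<Rightarrow> nat \<Rightarrow> nat) \<Rightarrow> real" where
  "period_cost n K f c m =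
     (\<Sum>k\<in>{0..K}. f k * (if (\<Sum>i<n. m k i) > 0 then 1 else 0)
                  + (\<Sum>i<n. c k i * real (m k i)))"

definition prec :: "(nat \<Rightarrow> nat \<Rightarrow> real) \<Rightarrow> nat \<Rightarrow> nat \<Rightarrow> nat \<Rightarrow> bool" where
  "prec c i k j \<longleftrightarrow> c k i < c j i \<or> (c k i = c j i \<and> k < j)"

text \<open>Tentative (priority-based greedy) allocation \<open>\<hat>m\<close> given current inventory
st and current order s.\<close>
definition mhat ::
  "nat \<Rightarrow> (nat \<Rightarrow> nat \<Rightarrow> real) \<Rightarrow> (nat \<Rightarrow> nat \<Rightarrow> nat) \<Rightarrow> (nat \<Rightarrow> nat) \<Rightarrow> nat \<Rightarrow> nat \<Rightarrow> nat" where
  "mhat K c st s k i =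
     (if k = 0 then
        s i - (\<Sum>k'\<in>{1..K}.
                 (if prec c i k' 0
                  then min (s i - (\<Sum>k''\<in>{k''\<in>{1..K}. prec c i k'' k'}. st k'' i)) (st k' i)
                  else 0))
      else if prec c i k 0
        then min (s i - (\<Sum>k''\<in>{k''\<in>{1..K}. prec c i k'' k}. st k'' i)) (st k i)
        else 0)"

definition ccvp_decision ::
  "nat \<Rightarrow> nat \<Rightarrow> (nat \<Rightarrow> real) \<Rightarrow> (nat \<Rightarrow> nat \<Rightarrow> real) \<Rightarrow> (nat \<Rightarrow> nat \<Rightarrow> nat) \<Rightarrow> (nat \<Rightarrow> nat)
     \<Rightarrow> nat \<Rightarrow> nat \<Rightarrow> nat" where
  "ccvp_decision n K f c st s =
     (if period_cost n K f c (mhat K c st s) > f 0 + (\<Sum>i<n. c 0 i * real (s i))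
      then (\<lambda>k i. if k = 0 then s i else 0)
      else mhat K c st s)"

text \<open>Inventory after period t under the policy (inventory after period 0 is I0).\<close>
fun ccvp_inv ::
  "nat \<Rightarrow> nat \<Rightarrow> (nat \<Rightarrow> real) \<Rightarrow> (nat \<Rightarrow> nat \<Rightarrow> real) \<Rightarrow> (nat \<Rightarrow> nat \<Rightarrow> nat) \<Rightarrow> (nat \<Rightarrow> nat \<Rightarrow> nat)
     \<Rightarrow> nat \<Rightarrow> nat \<Rightarrow> nat \<Rightarrow> nat" where
  "ccvp_inv n K f c I0 S 0 = I0"
| "ccvp_inv n K f c I0 S (Suc t) =
     (\<lambda>k i. ccvp_inv n K f c I0 S t k i
            - ccvp_decision n K f c (ccvp_inv n K f c I0 S t) (S (Suc t)) k i)"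

definition ccvp_alloc ::
  "nat \<Rightarrow> nat \<Rightarrow> (nat \<Rightarrow> real) \<Rightarrow> (nat \<Rightarrow> nat \<Rightarrow> real) \<Rightarrow> (nat \<Rightarrow> nat \<Rightarrow> nat) \<Rightarrow> (nat \<Rightarrow> nat \<Rightarrow> nat)
     \<Rightarrow> nat \<Rightarrow> nat \<Rightarrow> nat \<Rightarrow> nat" where
  "ccvp_alloc n K f c I0 S t = ccvp_decision n K f c (ccvp_inv n K f c I0 S (t - 1)) (S t)"

definition ALG_ccvp ::
  "nat \<Rightarrow> nat \<Rightarrow> nat \<Rightarrow> (nat \<Rightarrow> real) \<Rightarrow> (nat \<Rightarrow> nat \<Rightarrow> real) \<Rightarrow> (nat \<Rightarrow> nat \<Rightarrow> nat)
     \<Rightarrow> (nat \<Rightarrow> nat \<Rightarrow> nat) \<Rightarrow> real" where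
  "ALG_ccvp n K T f c I0 S = (\<Sum>t\<in>{1..T}. period_cost n K f c (ccvp_alloc n K f c I0 S t))"

definition feasible_plan ::
  "nat \<Rightarrow> nat \<Rightarrow> nat \<Rightarrow> (nat \<Rightarrow> nat \<Rightarrow> nat) \<Rightarrow> (nat \<Rightarrow> nat \<Rightarrow> nat) \<Rightarrow> (nat \<Rightarrow> nat \<Rightarrow> nat \<Rightarrow> nat) \<Rightarrow> bool" where
  "feasible_plan n K T I0 S M \<longleftrightarrow>
     (\<forall>t\<in>{1..T}. \<forall>i<n.
        (\<Sum>k\<in>{0..K}. M t k i) = S t i \<and>
        (\<forall>k\<in>{1..K}. int (M t k i) \<le> int (I0 k i) - (\<Sum>\<tau>\<in>{1..<t}. int (M \<tau> k i))))"

definition OPT ::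
  "nat \<Rightarrow> nat \<Rightarrow> nat \<Rightarrow> (nat \<Rightarrow> real) \<Rightarrow> (nat \<Rightarrow> nat \<Rightarrow> real) \<Rightarrow> (nat \<Rightarrow> nat \<Rightarrow> nat)
     \<Rightarrow> (nat \<Rightarrow> nat \<Rightarrow> nat) \<Rightarrow> real" where
  "OPT n K T f c I0 S =
     Inf ((\<lambda>M. \<Sum>t\<in>{1..T}. period_cost n K f c (M t)) ` {M. feasible_plan n K T I0 S M})"

end

theory Submission
  imports Defs "HOL-Analysis.Analysis"
begin

lemma prec_irrefl: "\<not> prec c i k k" by (auto simp: prec_def)
lemma prec_trans: "prec c i a b \<Longrightarrow> prec c i b d \<Longrightarrow> prec c i a d" by (auto simp: prec_def)
lemma prec_asym: "prec c i a b \<Longrightarrow> \<not> prec c i b a" by (auto simp: prec_def)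
lemma prec_total: "a \<noteq> b \<Longrightarrow> prec c i a b \<or> prec c i b a" by (auto simp: prec_def)

lemma mhat_pos:
  assumes "k \<noteq> 0"
  shows "mhat K c st s k i = (if prec c i k 0
        then min (s i - (\<Sum>k''\<in>{k''\<in>{1..K}. prec c i k'' k}. st k'' i)) (st k i) else 0)"
  using assms by (simp add: mhat_def)

lemma mhat_le_st: "k \<noteq> 0 \<Longrightarrow> mhat K c st s k i \<le> st k i"
  by (simp add: mhat_pos)

lemma mhat_le_s: "mhat K c st s k i \<le> s i"
  by (cases "k = 0") (auto simp: mhat_def)

lemma exists_max:
  assumes "finite C" "C \<noteq> {}"
  shows "\<exists>m\<in>C. \<forall>k\<in>C. k \<noteq> m \<longrightarrow> prec c i k m"
proof -
  define v where "v = Max ((\<lambda>k. c k i) ` C)"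
  define C1 where "C1 = {k\<in>C. c k i = v}"
  have v: "v \<in> (\<lambda>k. c k i) ` C" unfolding v_def using assms by simp
  have vmax: "c k i \<le> v" if "k \<in> C" for k unfolding v_def using assms that by simp
  have C1: "finite C1" "C1 \<noteq> {}" unfolding C1_def using assms v by auto
  define m where "m = Max C1"
  have m: "m \<in> C1" unfolding m_def using C1 by simp
  have "prec c i k m" if "k \<in> C" "k \<noteq> m" for k
  proof (cases "c k i = v")
    case True
    then have "k \<in> C1" using that unfolding C1_def by auto
    then have "k \<le> m" unfolding m_def using C1 by simp
    then show ?thesis using True m that unfolding C1_def prec_def by auto
  next
    case False
    then show ?thesis using vmax[OF that(1)] m unfolding C1_def prec_def by auto
  qed
  then show ?thesis using m unfolding C1_def by blast
qed

lemma prefix_sum: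
  assumes "C \<subseteq> {1..K}"
    and down: "\<forall>k\<in>C. \<forall>k'\<in>{1..K}. prec c i k' k \<longrightarrow> k' \<in> C"
    and below: "\<forall>k\<in>C. prec c i k 0"
  shows "(\<Sum>k\<in>C. mhat K c st s k i) = min (s i) (\<Sum>k\<in>C. st k i)"
  using assms
proof (induction "card C" arbitrary: C rule: less_induct)
  case less
  have fin: "finite C" using less.prems(1) finite_subset by blast
  show ?case
  proof (cases "C = {}")
    case True then show ?thesis by simp
  next
    case False
    obtain m where m: "m \<in> C" and mx: "\<forall>k\<in>C. k \<noteq> m \<longrightarrow> prec c i k m"
      using exists_max[OF fin False] by blast
    define C' where "C' = C - {m}"
    have card: "card C' < card C" unfolding C'_def using card_Diff1_less[OF fin m] .
    have d': "\<forall>k\<in>C'. \<forall>k'\<in>{1..K}. prec c i k' k \<longrightarrow> k' \<in> C'"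
      unfolding C'_def using less.prems(2) mx prec_asym by blast
    have sub': "C' \<subseteq> {1..K}" using less.prems(1) by (auto simp: C'_def)
    have bel': "\<forall>k\<in>C'. prec c i k 0" using less.prems(3) by (auto simp: C'_def)
    note IH = less.hyps[OF card sub' d' bel']
    have pre: "{k''\<in>{1..K}. prec c i k'' m} = C'"
      unfolding C'_def using less.prems(1,2) mx m prec_irrefl by blast
    have m0: "m \<noteq> 0" using m less.prems(1) by auto
    have mm: "mhat K c st s m i = min (s i - (\<Sum>k\<in>C'. st k i)) (st m i)"
      using mhat_pos[OF m0, of K c st s i] pre less.prems(3) m by simp
    have "(\<Sum>k\<in>C. mhat K c st s k i) = mhat K c st s m i + (\<Sum>k\<in>C'. mhat K c st s k i)"
      unfolding C'_def using fin m by (simp add: sum.remove)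
    also have "\<dots> = min (s i) (st m i + (\<Sum>k\<in>C'. st k i))" using mm IH by simp
    also have "\<dots> = min (s i) (\<Sum>k\<in>C. st k i)"
      unfolding C'_def using fin m by (simp add: sum.remove)
    finally show ?thesis .
  qed
qed

lemma mhat_fdc_sum: "(\<Sum>k\<in>{1..K}. mhat K c st s k i) = min (s i) (\<Sum>k\<in>{k\<in>{1..K}. prec c i k 0}. st k i)"
proof -
  have "(\<Sum>k\<in>{1..K}. mhat K c st s k i) = (\<Sum>k\<in>{k\<in>{1..K}. prec c i k 0}. mhat K c st s k i)"
    by (rule sum.mono_neutral_right) (auto simp: mhat_pos)
  also have "\<dots> = min (s i) (\<Sum>k\<in>{k\<in>{1..K}. prec c i k 0}. st k i)"
    by (rule prefix_sum) (auto intro: prec_trans)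
  finally show ?thesis .
qed

lemma mhat_total: "(\<Sum>k\<in>{0..K}. mhat K c st s k i) = s i"
proof -
  have z: "mhat K c st s 0 i = s i - (\<Sum>k\<in>{1..K}. mhat K c st s k i)"
    by (simp add: mhat_def mhat_pos)
  have "{0..K} = insert 0 {1..K}" by auto
  then have "(\<Sum>k\<in>{0..K}. mhat K c st s k i) = mhat K c st s 0 i + (\<Sum>k\<in>{1..K}. mhat K c st s k i)"
    by simp
  then show ?thesis using z mhat_fdc_sum[of K c st s i] by simp
qed

lemma stock_bound:
  fixes s S :: "nat \<Rightarrow> nat"
  assumes "\<forall>t. s (Suc t) = s t \<or> s (Suc t) = s t - min (S (Suc t)) (s t)"
  shows "(\<Sum>t\<in>{1..T}. S t - min (S t) (s (t-1))) + s 0 \<le> (\<Sum>t\<in>{1..T}. S t) + s T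
       \<and> (\<Sum>t\<in>{1..T}. S t - min (S t) (s (t-1))) \<le> (\<Sum>t\<in>{1..T}. S t) - s 0"
proof (induction T)
  case 0 then show ?case by simp
next
  case (Suc T)
  have e1: "(\<Sum>t\<in>{1..Suc T}. S t - min (S t) (s (t-1))) = (\<Sum>t\<in>{1..T}. S t - min (S t) (s (t-1))) + (S (Suc T) - min (S (Suc T)) (s T))"
    by simp
  have e2: "(\<Sum>t\<in>{1..Suc T}. S t) = (\<Sum>t\<in>{1..T}. S t) + S (Suc T)" by simp
  define A where "A = (\<Sum>t\<in>{1..T}. S t - min (S t) (s (t-1)))"
  define D where "D = (\<Sum>t\<in>{1..T}. S t)"
  have IH: "A + s 0 \<le> D + s T" "A \<le> D - s 0" using Suc.IH unfolding A_def D_def by auto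
  have st: "s (Suc T) = s T \<or> s (Suc T) = s T - min (S (Suc T)) (s T)" using assms by blast
  show ?case unfolding e1 e2 A_def[symmetric] D_def[symmetric] using IH st by linarith
qed

lemma split_if_sum:
  fixes x :: "nat \<Rightarrow> nat"
  assumes "C \<subseteq> A" "finite A" "\<forall>k\<in>A. k \<notin> C \<longleftrightarrow> P k"
  shows "(\<Sum>k\<in>A. if P k then x k else 0) = (\<Sum>k\<in>A. x k) - (\<Sum>k\<in>C. x k)"
proof -
  have "(\<Sum>k\<in>A. if P k then x k else 0) = (\<Sum>k\<in>A - C. x k)"
    by (rule sum.mono_neutral_cong_right) (use assms in auto)
  also have "\<dots> = (\<Sum>k\<in>A. x k) - (\<Sum>k\<in>C. x k)"
    using assms by (simp add: sum_diff_nat finite_subset)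
  finally show ?thesis .
qed

lemma theta_bound:
  fixes st :: "nat \<Rightarrow> nat \<Rightarrow> nat \<Rightarrow> nat" and g :: "nat \<Rightarrow> bool"
    and S :: "nat \<Rightarrow> nat \<Rightarrow> nat" and M :: "nat \<Rightarrow> nat \<Rightarrow> nat \<Rightarrow> nat"
  assumes upd: "\<And>t k. k \<in> {1..K} \<Longrightarrow> st (Suc t) k i = st t k i
                 - (if g (Suc t) then 0 else mhat K c (st t) (S (Suc t)) k i)"
    and fs: "\<And>t. t \<in> {1..T} \<Longrightarrow> (\<Sum>k\<in>{0..K}. M t k i) = S t i"
    and fi: "\<And>k. k \<in> {1..K} \<Longrightarrow> (\<Sum>t\<in>{1..T}. M t k i) \<le> st 0 k i"
  shows "(\<Sum>t\<in>{1..T}. \<Sum>k\<in>{0..K}. if \<theta> < c k i then mhat K c (st (t-1)) (S t) k i else 0)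
       \<le> (\<Sum>t\<in>{1..T}. \<Sum>k\<in>{0..K}. if \<theta> < c k i then M t k i else 0)"
proof (cases "\<theta> < c 0 i")
  case False
  have "(\<Sum>k\<in>{0..K}. if \<theta> < c k i then mhat K c (st (t-1)) (S t) k i else 0) = 0" for t
  proof (rule sum.neutral, intro ballI)
    fix k assume "k \<in> {0..K}"
    show "(if \<theta> < c k i then mhat K c (st (t-1)) (S t) k i else 0) = 0"
    proof (cases "k = 0")
      case True then show ?thesis using False by simp
    next
      case k: False
      show ?thesis
      proof (cases "prec c i k 0")
        case True then show ?thesis using False unfolding prec_def by auto
      next
        case False then show ?thesis using k by (simp add: mhat_pos)
      qed
    qed
  qed
  then show ?thesis by simp
next
  case True
  define C where "C = {k\<in>{1..K}. c k i \<le> \<theta>}"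
  have C3: "\<forall>k\<in>{0..K}. k \<notin> C \<longleftrightarrow> \<theta> < c k i"
  proof
    fix k assume "k \<in> {0..K}"
    then show "k \<notin> C \<longleftrightarrow> \<theta> < c k i" using True unfolding C_def by (cases "k = 0", auto)
  qed
  have C1: "C \<subseteq> {0..K}" unfolding C_def by auto
  have C2: "finite {0..K::nat}" by simp
  note C = C1 C2 C3
  have CK: "C \<subseteq> {1..K}" unfolding C_def by auto
  have Cd: "\<forall>k\<in>C. \<forall>k'\<in>{1..K}. prec c i k' k \<longrightarrow> k' \<in> C"
    unfolding C_def prec_def by auto
  have Cb: "\<forall>k\<in>C. prec c i k 0" unfolding C_def prec_def using True by auto
  define s where "s t = (\<Sum>k\<in>C. st t k i)" for t
  have ps: "(\<Sum>k\<in>C. mhat K c (st t) (S u) k i) = min (S u i) (s t)" for t u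
    unfolding s_def by (rule prefix_sum[OF CK Cd Cb])
  have sstep: "s (Suc t) = s t \<or> s (Suc t) = s t - min (S (Suc t) i) (s t)" for t
  proof (cases "g (Suc t)")
    case True
    have "s (Suc t) = s t" unfolding s_def
      by (rule sum.cong) (use upd True CK in auto)
    then show ?thesis by simp
  next
    case False
    have "s (Suc t) = (\<Sum>k\<in>C. st t k i - mhat K c (st t) (S (Suc t)) k i)" unfolding s_def
      by (rule sum.cong) (use upd False CK in auto)
    also have "\<dots> = s t - (\<Sum>k\<in>C. mhat K c (st t) (S (Suc t)) k i)" unfolding s_def
    proof (rule sum_subtractf_nat)
      fix k assume "k \<in> C"
      then have "k \<noteq> 0" using CK by auto
      then show "mhat K c (st t) (S (Suc t)) k i \<le> st t k i" by (rule mhat_le_st)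
    qed
    finally show ?thesis using ps by simp
  qed
  have LA: "(\<Sum>k\<in>{0..K}. if \<theta> < c k i then mhat K c (st (t-1)) (S t) k i else 0)
       = S t i - min (S t i) (s (t-1))" for t
    using split_if_sum[OF C, of "\<lambda>k. mhat K c (st (t-1)) (S t) k i"] mhat_total ps by simp
  have LO: "(\<Sum>k\<in>{0..K}. if \<theta> < c k i then M t k i else 0)
       = S t i - (\<Sum>k\<in>C. M t k i)" if "t \<in> {1..T}" for t
    using split_if_sum[OF C, of "\<lambda>k. M t k i"] fs[OF that] by simp
  note sb = stock_bound[of s "\<lambda>t. S t i" T, OF allI[OF sstep]]
  have "(\<Sum>t\<in>{1..T}. \<Sum>k\<in>{0..K}. if \<theta> < c k i then mhat K c (st (t-1)) (S t) k i else 0)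
       = (\<Sum>t\<in>{1..T}. S t i - min (S t i) (s (t-1)))" using LA by simp
  also have "\<dots> \<le> (\<Sum>t\<in>{1..T}. S t i) - s 0" using sb by simp
  also have "\<dots> \<le> (\<Sum>t\<in>{1..T}. S t i) - (\<Sum>t\<in>{1..T}. \<Sum>k\<in>C. M t k i)"
  proof -
    have "(\<Sum>t\<in>{1..T}. \<Sum>k\<in>C. M t k i) = (\<Sum>k\<in>C. \<Sum>t\<in>{1..T}. M t k i)" by (rule sum.swap)
    also have "\<dots> \<le> s 0" unfolding s_def by (rule sum_mono) (use fi CK in auto)
    finally show ?thesis by simp
  qed
  also have "\<dots> = (\<Sum>t\<in>{1..T}. S t i - (\<Sum>k\<in>C. M t k i))"
  proof -
    have le: "(\<Sum>k\<in>C. M t k i) \<le> S t i" if "t \<in> {1..T}" for t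
    proof -
      have "(\<Sum>k\<in>C. M t k i) \<le> (\<Sum>k\<in>{0..K}. M t k i)"
        by (rule sum_mono2) (use C in auto)
      then show ?thesis using fs[OF that] by simp
    qed
    show ?thesis by (rule sum_subtractf_nat[symmetric]) (use le in auto)
  qed
  also have "\<dots> = (\<Sum>t\<in>{1..T}. \<Sum>k\<in>{0..K}. if \<theta> < c k i then M t k i else 0)"
    using LO by simp
  finally show ?thesis .
qed

lemma step_integral:
  fixes x B :: real
  assumes "0 \<le> x" "x \<le> B"
  shows "((\<lambda>\<theta>. if \<theta> < x then 1 else 0) has_integral x) {0..B}"
proof -
  have a: "((\<lambda>\<theta>::real. if \<theta> < x then 1 else 0) has_integral x) {0..x}"
  proof -
    have "((\<lambda>\<theta>::real. 1::real) has_integral x) {0..x}"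
      using has_integral_const_real[of "1::real" 0 x] assms by simp
    then show ?thesis
      by (rule has_integral_spike_finite[where S="{x}", rotated 2]) auto
  qed
  have b: "((\<lambda>\<theta>::real. if \<theta> < x then 1 else 0) has_integral 0) {x..B}"
  proof -
    have "((\<lambda>\<theta>::real. 0::real) has_integral 0) {x..B}" by simp
    then show ?thesis
      using has_integral_spike_finite[of "{}" "{x..B}" "\<lambda>\<theta>. if \<theta> < x then 1 else 0" "\<lambda>\<theta>. 0" 0] by auto
  qed
  from has_integral_combine[OF _ _ a b] assms show ?thesis by simp
qed

lemma layer:
  fixes a b c :: "'j \<Rightarrow> real"
  assumes J: "finite J" and c: "\<forall>j\<in>J. c j \<ge> 0"
    and le: "\<And>\<theta>. (\<Sum>j\<in>J. if \<theta> < c j then a j else 0) \<le> (\<Sum>j\<in>J. if \<theta> < c j then b j else 0)"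
  shows "(\<Sum>j\<in>J. a j * c j) \<le> (\<Sum>j\<in>J. b j * c j)"
proof -
  define B where "B = (\<Sum>j\<in>J. c j)"
  have cB: "c j \<le> B" if "j \<in> J" for j
    unfolding B_def using member_le_sum[OF that] c J by auto
  have gen: "((\<lambda>\<theta>. \<Sum>j\<in>J. if \<theta> < c j then w j else 0) has_integral (\<Sum>j\<in>J. w j * c j)) {0..B}" for w
  proof (rule has_integral_sum[OF J])
    fix j assume j: "j \<in> J"
    have "((\<lambda>\<theta>. w j * (if \<theta> < c j then 1 else 0)) has_integral w j * c j) {0..B}"
      using has_integral_mult_right[OF step_integral[of "c j" B]] c j cB by auto
    then show "((\<lambda>\<theta>. if \<theta> < c j then w j else 0) has_integral w j * c j) {0..B}"
      by (simp add: if_distrib cong: if_cong)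
  qed
  show ?thesis by (rule has_integral_le[OF gen gen]) (use le in auto)
qed

definition fixc :: "nat \<Rightarrow> nat \<Rightarrow> (nat \<Rightarrow> real) \<Rightarrow> (nat \<Rightarrow> nat \<Rightarrow> nat) \<Rightarrow> real" where
  "fixc n K f m = (\<Sum>k\<in>{0..K}. f k * (if (\<Sum>i<n. m k i) > 0 then 1 else 0))"
definition varc :: "nat \<Rightarrow> nat \<Rightarrow> (nat \<Rightarrow> nat \<Rightarrow> real) \<Rightarrow> (nat \<Rightarrow> nat \<Rightarrow> nat) \<Rightarrow> real" where
  "varc n K c m = (\<Sum>k\<in>{0..K}. \<Sum>i<n. c k i * real (m k i))"

lemma pc_split: "period_cost n K f c m = fixc n K f m + varc n K c m"
  by (simp add: period_cost_def fixc_def varc_def sum.distrib)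

lemma inv_upd:
  assumes "k \<in> {1..K}"
  shows "ccvp_inv n K f c I0 S (Suc t) k i = ccvp_inv n K f c I0 S t k i
     - (if period_cost n K f c (mhat K c (ccvp_inv n K f c I0 S t) (S (Suc t)))
            > f 0 + (\<Sum>i<n. c 0 i * real (S (Suc t) i))
        then 0 else mhat K c (ccvp_inv n K f c I0 S t) (S (Suc t)) k i)"
  using assms by (simp add: ccvp_decision_def)

lemma feas_total:
  assumes "feasible_plan n K T I0 S M" "i < n" "k \<in> {1..K}"
  shows "(\<Sum>t\<in>{1..T}. M t k i) \<le> I0 k i"
proof (cases "T = 0")
  case True then show ?thesis by simp
next
  case False
  then have T: "T \<in> {1..T}" by auto
  have "int (M T k i) \<le> int (I0 k i) - (\<Sum>\<tau>\<in>{1..<T}. int (M \<tau> k i))"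
    using assms T unfolding feasible_plan_def by blast
  then have "int (M T k i + (\<Sum>\<tau>\<in>{1..<T}. M \<tau> k i)) \<le> int (I0 k i)"
    by (simp add: of_nat_sum)
  then have h2: "M T k i + (\<Sum>\<tau>\<in>{1..<T}. M \<tau> k i) \<le> I0 k i" by (simp only: of_nat_le_iff)
  moreover have "{1..T} = insert T {1..<T}" using False by auto
  ultimately show ?thesis by simp
qed

lemma virtual_var:
  assumes feas: "feasible_plan n K T I0 S M"
    and cnn: "\<forall>k\<in>{0..K}. \<forall>i<n. c k i \<ge> 0"
  shows "(\<Sum>t\<in>{1..T}. varc n K c (mhat K c (ccvp_inv n K f c I0 S (t-1)) (S t)))
       \<le> (\<Sum>t\<in>{1..T}. varc n K c (M t))"
proof -
  define mh where "mh t = mhat K c (ccvp_inv n K f c I0 S (t-1)) (S t)" for t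
  define J where "J = {1..T} \<times> {0..K}"
  have J: "finite J" unfolding J_def by simp
  have per: "(\<Sum>j\<in>J. real (mh (fst j) (snd j) i) * c (snd j) i)
        \<le> (\<Sum>j\<in>J. real (M (fst j) (snd j) i) * c (snd j) i)" if i: "i < n" for i
  proof (rule layer[OF J])
    show "\<forall>j\<in>J. c (snd j) i \<ge> 0" using cnn i unfolding J_def by auto
    fix \<theta> :: real
    have conv: "(\<Sum>j\<in>J. if \<theta> < c (snd j) i then real (A (fst j) (snd j) i) else 0)
        = real (\<Sum>t\<in>{1..T}. \<Sum>k\<in>{0..K}. if \<theta> < c k i then A t k i else 0)" for A :: "nat \<Rightarrow> nat \<Rightarrow> nat \<Rightarrow> nat"
      unfolding J_def by (simp add: of_nat_sum sum.cartesian_product case_prod_beta) (rule sum.cong, auto)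
    have tb: "(\<Sum>t\<in>{1..T}. \<Sum>k\<in>{0..K}. if \<theta> < c k i then mh t k i else 0)
       \<le> (\<Sum>t\<in>{1..T}. \<Sum>k\<in>{0..K}. if \<theta> < c k i then M t k i else 0)"
      unfolding mh_def
    proof (rule theta_bound[where g = "\<lambda>t. period_cost n K f c (mhat K c (ccvp_inv n K f c I0 S (t-1)) (S t))
            > f 0 + (\<Sum>i<n. c 0 i * real (S t i))"])
      fix t k assume "k \<in> {1..K}"
      then show "ccvp_inv n K f c I0 S (Suc t) k i = ccvp_inv n K f c I0 S t k i
        - (if period_cost n K f c (mhat K c (ccvp_inv n K f c I0 S (Suc t - 1)) (S (Suc t)))
            > f 0 + (\<Sum>i<n. c 0 i * real (S (Suc t) i))
           then 0 else mhat K c (ccvp_inv n K f c I0 S t) (S (Suc t)) k i)"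
        using inv_upd by simp
    next
      fix t assume "t \<in> {1..T}"
      then show "(\<Sum>k\<in>{0..K}. M t k i) = S t i" using feas i unfolding feasible_plan_def by blast
    next
      fix k assume "k \<in> {1..K}"
      then show "(\<Sum>t\<in>{1..T}. M t k i) \<le> ccvp_inv n K f c I0 S 0 k i"
        using feas_total[OF feas i] by simp
    qed
    show "(\<Sum>j\<in>J. if \<theta> < c (snd j) i then real (mh (fst j) (snd j) i) else 0)
        \<le> (\<Sum>j\<in>J. if \<theta> < c (snd j) i then real (M (fst j) (snd j) i) else 0)"
      unfolding conv[of mh] conv[of M] using tb by linarith
  qed
  have sw: "(\<Sum>t\<in>{1..T}. varc n K c (A t)) = (\<Sum>i<n. \<Sum>j\<in>J. real (A (fst j) (snd j) i) * c (snd j) i)"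
    for A :: "nat \<Rightarrow> nat \<Rightarrow> nat \<Rightarrow> nat"
  proof -
    have "(\<Sum>t\<in>{1..T}. varc n K c (A t)) = (\<Sum>t\<in>{1..T}. \<Sum>k\<in>{0..K}. \<Sum>i<n. real (A t k i) * c k i)"
      unfolding varc_def by (simp add: mult.commute)
    also have "\<dots> = (\<Sum>j\<in>J. \<Sum>i<n. real (A (fst j) (snd j) i) * c (snd j) i)"
    proof -
      have cp: "(\<Sum>t\<in>{1..T}. \<Sum>k\<in>{0..K}. h t k) = (\<Sum>j\<in>J. h (fst j) (snd j))" for h :: "nat \<Rightarrow> nat \<Rightarrow> real"
        unfolding J_def by (simp add: sum.cartesian_product case_prod_beta)
      show ?thesis by (rule cp)
    qed
    also have "\<dots> = (\<Sum>i<n. \<Sum>j\<in>J. real (A (fst j) (snd j) i) * c (snd j) i)"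
      by (rule sum.swap)
    finally show ?thesis .
  qed
  show ?thesis unfolding mh_def[symmetric] sw[of mh] sw[of M]
    by (rule sum_mono) (use per in auto)
qed

lemma sum_0K: "(\<Sum>k\<in>{0..K}. h k) = h 0 + (\<Sum>k\<in>{1..K}. h (k::nat))"
proof -
  have "{0..K} = insert 0 {1..K}" by auto
  then show ?thesis by simp
qed

lemma period_bound:
  fixes f :: "nat \<Rightarrow> real" and R :: real
  assumes f0: "f 0 \<ge> 0" and fpos: "\<forall>k\<in>{1..K}. f k > 0" and K: "K \<ge> 1"
    and cnn: "\<forall>k\<in>{0..K}. \<forall>i<n. c k i \<ge> 0"
    and RF: "f 0 + (\<Sum>k\<in>{1..K}. f k) \<le> R * Min (f ` {1..K})" and R2: "R \<ge> 2"
    and Msum: "\<forall>i<n. (\<Sum>k\<in>{0..K}. Mt k i) = s i"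
  shows "period_cost n K f c (ccvp_decision n K f c st s) - varc n K c (mhat K c st s)
         \<le> R * fixc n K f Mt + (R - 1) * varc n K c Mt"
proof -
  define mh where "mh = mhat K c st s"
  define V0 where "V0 = (\<Sum>i<n. c 0 i * real (s i))"
  define ind :: real where "ind = (if (\<Sum>i<n. s i) > 0 then 1 else 0)"
  define F where "F = f 0 + (\<Sum>k\<in>{1..K}. f k)"
  define r :: "nat \<Rightarrow> nat \<Rightarrow> nat" where "r = (\<lambda>k i. if k = 0 then s i else 0)"
  define e where "e = period_cost n K f c (ccvp_decision n K f c st s) - varc n K c mh"
  have fnn: "\<forall>k\<in>{0..K}. f k \<ge> 0"
  proof
    fix k :: nat assume "k \<in> {0..K}"
    then show "f k \<ge> 0" using f0 fpos by (cases "k = 0") (auto simp: less_imp_le)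
  qed
  have fixle: "fixc n K f m \<le> F" for m
  proof -
    have "fixc n K f m \<le> (\<Sum>k\<in>{0..K}. f k)" unfolding fixc_def
      by (rule sum_mono) (use fnn in auto)
    then show ?thesis unfolding F_def sum_0K[of f K] .
  qed
  have fixnn: "0 \<le> fixc n K f m" for m unfolding fixc_def by (rule sum_nonneg) (use fnn in auto)
  have varnn: "0 \<le> varc n K c m" for m unfolding varc_def
    by (intro sum_nonneg) (use cnn in auto)
  have V0nn: "0 \<le> V0" unfolding V0_def by (intro sum_nonneg) (use cnn in auto)
  have indnn: "0 \<le> ind" unfolding ind_def by simp
  have fixr: "fixc n K f r = f 0 * ind"
    unfolding fixc_def sum_0K[of _ K] r_def ind_def by simp
  have varr: "varc n K c r = V0"
    unfolding varc_def sum_0K[of _ K] r_def V0_def by simp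
  have E: "e \<le> F \<and> e \<le> f 0 * ind + V0"
  proof (cases "period_cost n K f c mh > f 0 + V0")
    case True
    then have dec: "ccvp_decision n K f c st s = r"
      unfolding ccvp_decision_def mh_def V0_def r_def by simp
    have e: "e = f 0 * ind + V0 - varc n K c mh"
      unfolding e_def dec pc_split fixr varr by simp
    have "V0 - varc n K c mh < fixc n K f mh - f 0" using True unfolding pc_split by simp
    moreover have "f 0 * ind \<le> f 0" unfolding ind_def using f0 by simp
    ultimately show ?thesis using fixle[of mh] varnn[of mh] e by linarith
  next
    case False
    then have dec: "ccvp_decision n K f c st s = mh"
      unfolding ccvp_decision_def mh_def V0_def by simp
    have e: "e = fixc n K f mh" unfolding e_def dec pc_split by simp
    have le: "fixc n K f mh \<le> f 0 + V0" using False varnn[of mh] unfolding pc_split by simp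
    show ?thesis
    proof (cases "(\<Sum>i<n. s i) > 0")
      case True then show ?thesis using e le fixle[of mh] unfolding ind_def by simp
    next
      case False
      then have "\<forall>i<n. s i = 0" by simp
      then have "\<forall>k. \<forall>i<n. mh k i = 0" unfolding mh_def using mhat_le_s
        by (metis le_zero_eq)
      then have "fixc n K f mh = 0" unfolding fixc_def by simp
      then show ?thesis using e V0nn indnn fnn fixle[of mh] unfolding ind_def
        using F_def f0 fpos by (simp add: sum_nonneg)
    qed
  qed
  show ?thesis
  proof (cases "\<exists>k\<in>{1..K}. (\<Sum>i<n. Mt k i) > 0")
    case True
    then obtain k where k: "k \<in> {1..K}" "(\<Sum>i<n. Mt k i) > 0" by blast
    have "f k \<le> fixc n K f Mt" unfolding fixc_def
    proof -
      have "f k * (if (\<Sum>i<n. Mt k i) > 0 then 1 else 0) \<le> (\<Sum>k\<in>{0..K}. f k * (if (\<Sum>i<n. Mt k i) > 0 then 1 else 0))"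
        by (rule member_le_sum) (use k fnn in auto)
      then show "f k \<le> (\<Sum>k\<in>{0..K}. f k * (if (\<Sum>i<n. Mt k i) > 0 then 1 else 0))" using k by simp
    qed
    moreover have "Min (f ` {1..K}) \<le> f k" using k by simp
    ultimately have "Min (f ` {1..K}) \<le> fixc n K f Mt" by linarith
    then have "R * Min (f ` {1..K}) \<le> R * fixc n K f Mt" using R2 by (intro mult_left_mono) auto
    then have "F \<le> R * fixc n K f Mt" using RF unfolding F_def by linarith
    moreover have "0 \<le> (R - 1) * varc n K c Mt" using R2 varnn by simp
    ultimately show ?thesis using E unfolding e_def mh_def by linarith
  next
    case False
    then have z: "\<forall>k\<in>{1..K}. \<forall>i<n. Mt k i = 0" by simp
    have m0: "\<forall>i<n. Mt 0 i = s i" using Msum z unfolding sum_0K[of _ K] by simp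
    have eqM: "\<forall>k\<in>{0..K}. \<forall>i<n. Mt k i = r k i" unfolding r_def using z m0 by auto
    have "fixc n K f Mt = fixc n K f r" unfolding fixc_def
      by (rule sum.cong) (use eqM in auto)
    moreover have "varc n K c Mt = varc n K c r" unfolding varc_def
      by (rule sum.cong) (use eqM in auto)
    ultimately have fM: "fixc n K f Mt = f 0 * ind" and vM: "varc n K c Mt = V0" using fixr varr by auto
    have a: "f 0 * ind \<le> R * (f 0 * ind)" using R2 f0 indnn
    proof -
      have "1 * (f 0 * ind) \<le> R * (f 0 * ind)" using R2 f0 indnn by (intro mult_right_mono) auto
      then show ?thesis by simp
    qed
    have b: "V0 \<le> (R - 1) * V0" using R2 V0nn
    proof -
      have "1 * V0 \<le> (R - 1) * V0" using R2 V0nn by (intro mult_right_mono) auto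
      then show ?thesis by simp
    qed
    show ?thesis unfolding fM vM using E a b unfolding e_def mh_def by linarith
  qed
qed

theorem theorem3:
  fixes K :: nat and f :: "nat \<Rightarrow> real"
  assumes K: "K \<ge> 1"
    and f0: "f 0 \<ge> 0"
    and fpos: "\<forall>k\<in>{1..K}. f k > 0"
  shows "\<forall>(n::nat) (T::nat) (c::nat \<Rightarrow> nat \<Rightarrow> real) (I0::nat \<Rightarrow> nat \<Rightarrow> nat) (S::nat \<Rightarrow> nat \<Rightarrow> nat).
           (\<forall>k\<in>{0..K}. \<forall>i<n. c k i \<ge> 0) \<longrightarrow>
           ALG_ccvp n K T f c I0 S
             \<le> max ((f 0 + (\<Sum>k\<in>{1..K}. f k)) / Min (f ` {1..K})) 2 * OPT n K T f c I0 S"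
proof (intro allI impI)
  fix n T :: nat and c :: "nat \<Rightarrow> nat \<Rightarrow> real" and I0 S :: "nat \<Rightarrow> nat \<Rightarrow> nat"
  assume cnn: "\<forall>k\<in>{0..K}. \<forall>i<n. c k i \<ge> 0"
  define fmin where "fmin = Min (f ` {1..K})"
  define R where "R = max ((f 0 + (\<Sum>k\<in>{1..K}. f k)) / fmin) 2"
  have fmin_pos: "fmin > 0"
  proof -
    have "fmin \<in> f ` {1..K}" unfolding fmin_def using K by (intro Min_in) auto
    then show ?thesis using fpos by auto
  qed
  have R2: "R \<ge> 2" unfolding R_def by simp
  have RF: "f 0 + (\<Sum>k\<in>{1..K}. f k) \<le> R * Min (f ` {1..K})"
  proof -
    have "(f 0 + (\<Sum>k\<in>{1..K}. f k)) / fmin \<le> R" unfolding R_def by simp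
    then show ?thesis using fmin_pos unfolding fmin_def[symmetric] by (simp add: pos_divide_le_eq)
  qed
  define st where "st t = ccvp_inv n K f c I0 S t" for t
  define cost where "cost M = (\<Sum>t\<in>{1..T}. period_cost n K f c (M t))" for M :: "nat \<Rightarrow> nat \<Rightarrow> nat \<Rightarrow> nat"
  have main: "ALG_ccvp n K T f c I0 S \<le> R * cost M" if feas: "feasible_plan n K T I0 S M" for M
  proof -
    define mh where "mh t = mhat K c (st (t-1)) (S t)" for t
    have pb: "period_cost n K f c (ccvp_alloc n K f c I0 S t) - varc n K c (mh t)
          \<le> R * fixc n K f (M t) + (R - 1) * varc n K c (M t)" if t: "t \<in> {1..T}" for t
      unfolding ccvp_alloc_def mh_def st_def
    proof (rule period_bound[OF f0 fpos K cnn RF R2])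
      show "\<forall>i<n. (\<Sum>k\<in>{0..K}. M t k i) = S t i" using feas t unfolding feasible_plan_def by blast
    qed
    have vv: "(\<Sum>t\<in>{1..T}. varc n K c (mh t)) \<le> (\<Sum>t\<in>{1..T}. varc n K c (M t))"
      unfolding mh_def st_def by (rule virtual_var[OF feas cnn])
    have "ALG_ccvp n K T f c I0 S
        = (\<Sum>t\<in>{1..T}. period_cost n K f c (ccvp_alloc n K f c I0 S t) - varc n K c (mh t))
          + (\<Sum>t\<in>{1..T}. varc n K c (mh t))"
      unfolding ALG_ccvp_def by (simp add: sum_subtractf)
    also have "\<dots> \<le> (\<Sum>t\<in>{1..T}. R * fixc n K f (M t) + (R - 1) * varc n K c (M t))
          + (\<Sum>t\<in>{1..T}. varc n K c (M t))"
    proof -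
      have "(\<Sum>t\<in>{1..T}. period_cost n K f c (ccvp_alloc n K f c I0 S t) - varc n K c (mh t))
         \<le> (\<Sum>t\<in>{1..T}. R * fixc n K f (M t) + (R - 1) * varc n K c (M t))"
        by (rule sum_mono) (rule pb)
      then show ?thesis using vv by linarith
    qed
    also have "\<dots> = R * cost M"
      unfolding cost_def pc_split by (simp add: sum.distrib sum_distrib_left algebra_simps sum_subtractf)
    finally show ?thesis .
  qed
  define X where "X = (\<lambda>M. \<Sum>t\<in>{1..T}. period_cost n K f c (M t)) ` {M. feasible_plan n K T I0 S M}"
  have ne: "X \<noteq> {}"
  proof -
    define M0 :: "nat \<Rightarrow> nat \<Rightarrow> nat \<Rightarrow> nat" where "M0 = (\<lambda>t k i. if k = 0 then S t i else 0)"
    have "feasible_plan n K T I0 S M0"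
      unfolding feasible_plan_def M0_def by (simp add: sum_0K[of _ K])
    then show ?thesis unfolding X_def by blast
  qed
  have lb: "ALG_ccvp n K T f c I0 S / R \<le> x" if "x \<in> X" for x
  proof -
    obtain M where M: "feasible_plan n K T I0 S M" "x = cost M" using \<open>x \<in> X\<close> unfolding X_def cost_def by blast
    show ?thesis using main[OF M(1)] R2 M(2) by (simp add: pos_divide_le_eq mult.commute)
  qed
  have "ALG_ccvp n K T f c I0 S / R \<le> Inf X" by (rule cInf_greatest[OF ne lb])
  then have "ALG_ccvp n K T f c I0 S \<le> R * Inf X" using R2 by (simp add: pos_divide_le_eq mult.commute)
  then show "ALG_ccvp n K T f c I0 S
             \<le> max ((f 0 + (\<Sum>k\<in>{1..K}. f k)) / Min (f ` {1..K})) 2 * OPT n K T f c I0 S"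
    unfolding OPT_def X_def[symmetric] R_def fmin_def .
qed

end
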